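(* Let $\mathcal C\subset\mathbb R^2$ be an open double cone with apex $z\in\mathbb R^2$ and angle $\mathcal A\in(0,\pi)$. Then, with $\gamma_2=\mathcal N(0,I_{2\times2})$ the standard Gaussian distribution on $\mathbb R^2$, \[ \gamma_2(\mathcal C)\ge\frac{\mathcal A}{2\pi}e^{-\|z\|^2}. \]
   Context: A set $\mathcal C\subset\mathbb R^2$ is an open double cone with apex $z$ if $\mathcal C=\{z+au+bv:(a,b)\in(0,\infty)^2\cup(-\infty,0)^2\}$ for some linearly independent $u,v\in\mathbb R^2$; its angle is $\angle(u,v)=\arccos(\langle u,v\rangle/(\|u\|\|v\|))\in(0,\pi)$, which does not depend on the choice of $(u,v)$ representing $\mathcal C$. *)

theory Defs
  imports "HOL-Analysis.Analysis"
begin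

definition double_cone :: "real^2 \<Rightarrow> real^2 \<Rightarrow> real^2 \<Rightarrow> (real^2) set" where
  "double_cone z u v = {z + a *\<^sub>R u + b *\<^sub>R v | a b.
      (a > 0 \<and> b > 0) \<or> (a < 0 \<and> b < 0)}"

definition vec_angle :: "real^2 \<Rightarrow> real^2 \<Rightarrow> real" where
  "vec_angle u v = arccos ((u \<bullet> v) / (norm u * norm v))"

definition gauss2 :: "(real^2) measure" where
  "gauss2 = density lborel (\<lambda>x. ennreal (exp (- (norm x)\<^sup>2 / 2) / (2 * pi)))"

end

theory Submission
  imports Defs "HOL-Probability.Distributions"
begin


definition rho :: "real \<Rightarrow> real" where "rho s = sqrt (- ln (1 - s))"
definition rhod :: "real \<Rightarrow> real" where "rhod s = 1 / (2 * (1 - s) * rho s)"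

lemma rho_deriv: assumes "0 < s" "s < 1" shows "(rho has_real_derivative rhod s) (at s)"
proof -
  have "- ln (1 - s) > 0" using assms by simp
  have "((\<lambda>s. sqrt (- ln (1 - s))) has_real_derivative
      (inverse (sqrt (- ln (1 - s))) / 2) * (- (inverse (1 - s) * (- 1)))) (at s)"
  proof (rule DERIV_chain2[OF DERIV_real_sqrt])
    show "0 < - ln (1 - s)" by fact
    have "((\<lambda>s. ln (1 - s)) has_real_derivative inverse (1 - s) * (- 1)) (at s)"
      by (rule DERIV_chain2[OF DERIV_ln]) (use assms in \<open>auto intro!: derivative_eq_intros\<close>)
    then show "((\<lambda>s. - ln (1 - s)) has_real_derivative - (inverse (1 - s) * (- 1))) (at s)"
      by (rule DERIV_minus)
  qed
  then show ?thesis unfolding rho_def[abs_def] rhod_def using assms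
    by (simp add: field_simps)
qed

lemma nth_deriv: "((\<lambda>p::real^2. p$i) has_derivative (\<lambda>h. h$i)) F"
  by (rule bounded_linear_imp_has_derivative) (rule bounded_linear_vec_nth)

definition e1 :: "real^2" where "e1 = axis 1 1"
definition e2 :: "real^2" where "e2 = axis 2 1"

definition Gm :: "real^2 \<Rightarrow> real \<Rightarrow> real \<Rightarrow> real \<Rightarrow> real^2 \<Rightarrow> real^2" where
  "Gm z \<epsilon> \<alpha> \<sigma> p = (\<epsilon> * rho (p$1) * cos (\<alpha> + \<sigma> * p$2)) *\<^sub>R e1 + (\<epsilon> * rho (p$1) * sin (\<alpha> + \<sigma> * p$2)) *\<^sub>R e2 + z"

definition Gd :: "real \<Rightarrow> real \<Rightarrow> real \<Rightarrow> real^2 \<Rightarrow> real^2 \<Rightarrow> real^2" where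
  "Gd \<epsilon> \<alpha> \<sigma> p h =
     (\<epsilon> * (h$1 * rhod (p$1) * cos (\<alpha> + \<sigma> * p$2) - rho (p$1) * (\<sigma> * h$2) * sin (\<alpha> + \<sigma> * p$2))) *\<^sub>R e1
   + (\<epsilon> * (h$1 * rhod (p$1) * sin (\<alpha> + \<sigma> * p$2) + rho (p$1) * (\<sigma> * h$2) * cos (\<alpha> + \<sigma> * p$2))) *\<^sub>R e2"

lemma Gm_deriv: assumes "0 < p$1" "p$1 < 1"
  shows "(Gm z \<epsilon> \<alpha> \<sigma> has_derivative Gd \<epsilon> \<alpha> \<sigma> p) (at p within S)"
proof -
  have r: "((\<lambda>q::real^2. rho (q$1)) has_derivative (\<lambda>h. h$1 * rhod (p$1))) (at p within S)"
    by (rule DERIV_compose_FDERIV[OF rho_deriv[OF assms] nth_deriv])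
  have c: "((\<lambda>q::real^2. cos (\<alpha> + \<sigma> * q$2)) has_derivative (\<lambda>h. (\<sigma> * h$2) * - sin (\<alpha> + \<sigma> * p$2))) (at p within S)"
    by (rule DERIV_compose_FDERIV[OF DERIV_cos]) (auto intro!: derivative_eq_intros nth_deriv)
  have s: "((\<lambda>q::real^2. sin (\<alpha> + \<sigma> * q$2)) has_derivative (\<lambda>h. (\<sigma> * h$2) * cos (\<alpha> + \<sigma> * p$2))) (at p within S)"
    by (rule DERIV_compose_FDERIV[OF DERIV_sin]) (auto intro!: derivative_eq_intros nth_deriv)
  have a: "((\<lambda>q::real^2. \<epsilon> * rho (q$1)) has_derivative (\<lambda>h. \<epsilon> * (h$1 * rhod (p$1)) + 0 * rho (p$1))) (at p within S)"
    by (rule has_derivative_mult[OF has_derivative_const r])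
  have m1: "((\<lambda>q::real^2. \<epsilon> * rho (q$1) * cos (\<alpha> + \<sigma> * q$2)) has_derivative
     (\<lambda>h. \<epsilon> * rho (p$1) * ((\<sigma> * h$2) * - sin (\<alpha> + \<sigma> * p$2)) + (\<epsilon> * (h$1 * rhod (p$1)) + 0 * rho (p$1)) * cos (\<alpha> + \<sigma> * p$2))) (at p within S)"
    by (rule has_derivative_mult[OF a c])
  have m2: "((\<lambda>q::real^2. \<epsilon> * rho (q$1) * sin (\<alpha> + \<sigma> * q$2)) has_derivative
     (\<lambda>h. \<epsilon> * rho (p$1) * ((\<sigma> * h$2) * cos (\<alpha> + \<sigma> * p$2)) + (\<epsilon> * (h$1 * rhod (p$1)) + 0 * rho (p$1)) * sin (\<alpha> + \<sigma> * p$2))) (at p within S)"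
    by (rule has_derivative_mult[OF a s])
  show ?thesis unfolding Gm_def[abs_def] Gd_def[abs_def]
    by (rule has_derivative_eq_rhs, rule has_derivative_add_const,
        rule has_derivative_add[OF has_derivative_scaleR_left[OF m1] has_derivative_scaleR_left[OF m2]])
       (simp add: fun_eq_iff algebra_simps)
qed

lemma det_Gd: assumes "\<bar>\<epsilon>\<bar> = 1" "\<bar>\<sigma>\<bar> = 1"
  shows "\<bar>det (matrix (Gd \<epsilon> \<alpha> \<sigma> p))\<bar> = \<bar>rho (p$1) * rhod (p$1)\<bar>"
proof -
  have sc: "(sin (\<alpha> + \<sigma> * p$2))\<^sup>2 + (cos (\<alpha> + \<sigma> * p$2))\<^sup>2 = 1" by simp
  have "det (matrix (Gd \<epsilon> \<alpha> \<sigma> p)) = \<epsilon> * \<epsilon> * \<sigma> * (rho (p$1) * rhod (p$1))"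
    by (simp add: det_2 matrix_def Gd_def e1_def e2_def axis_def) (use sc in algebra)
  then show ?thesis using assms by (simp add: abs_mult)
qed

definition phi :: "real^2 \<Rightarrow> real" where
  "phi x = exp (- (norm x)\<^sup>2 / 2) / (2 * pi)"

lemma phi_cont: "continuous_on S phi"
  unfolding phi_def by (intro continuous_intros) auto

lemma e_comp[simp]: "e1$1 = 1" "e1$2 = 0" "e2$1 = 0" "e2$2 = 1"
  by (simp_all add: e1_def e2_def axis_def)

lemma norm2: "(norm (x::real^2))\<^sup>2 = (x$1)\<^sup>2 + (x$2)\<^sup>2"
  unfolding power2_norm_eq_inner inner_vec_def sum_2 by (simp add: power2_eq_square)

lemma vec2_eq: "(x::real^2) = y \<longleftrightarrow> x$1 = y$1 \<and> x$2 = y$2"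
  by (simp add: vec_eq_iff forall_2)

lemma rho_pos: "0 < s \<Longrightarrow> s < 1 \<Longrightarrow> rho s > 0"
  unfolding rho_def by simp

lemma rho_sq: "0 \<le> s \<Longrightarrow> s < 1 \<Longrightarrow> (rho s)\<^sup>2 = - ln (1 - s)"
  unfolding rho_def by simp

lemma rho_rhod: "0 < s \<Longrightarrow> s < 1 \<Longrightarrow> rho s * rhod s = 1 / (2 * (1 - s))"
  using rho_pos[of s] unfolding rhod_def by (simp add: field_simps)

lemma exp_rho: "0 \<le> s \<Longrightarrow> s < 1 \<Longrightarrow> exp (- (rho s)\<^sup>2) = 1 - s"
  by (simp add: rho_sq)

lemma norm_Gm: assumes "\<bar>\<epsilon>\<bar> = 1"
  shows "(norm (Gm z \<epsilon> \<alpha> \<sigma> p - z))\<^sup>2 = (rho (p$1))\<^sup>2"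
proof -
  have sc: "(sin (\<alpha> + \<sigma> * p$2))\<^sup>2 + (cos (\<alpha> + \<sigma> * p$2))\<^sup>2 = 1" by simp
  have e: "\<epsilon> * \<epsilon> = 1" proof -
    have "\<epsilon> = 1 \<or> \<epsilon> = -1" using assms by auto
    then show ?thesis by auto
  qed
  have "(norm (Gm z \<epsilon> \<alpha> \<sigma> p - z))\<^sup>2 = \<epsilon> * \<epsilon> * (rho (p$1))\<^sup>2"
    unfolding norm2 Gm_def by simp (use sc in algebra)
  then show ?thesis using e by simp
qed

lemma phi_lower: "phi (y + z) \<ge> exp (- (norm z)\<^sup>2) * exp (- (norm y)\<^sup>2) / (2 * pi)"
proof -
  have "norm (y + z) \<le> norm y + norm z" by (rule norm_triangle_ineq)
  then have "(norm (y + z))\<^sup>2 \<le> (norm y + norm z)\<^sup>2" by (simp add: power_mono)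
  also have "\<dots> \<le> 2 * (norm y)\<^sup>2 + 2 * (norm z)\<^sup>2"
  proof -
    have "2 * (norm y)\<^sup>2 + 2 * (norm z)\<^sup>2 - (norm y + norm z)\<^sup>2 = (norm y - norm z)\<^sup>2" by algebra
    moreover have "(norm y - norm z)\<^sup>2 \<ge> 0" by simp
    ultimately show ?thesis by linarith
  qed
  finally have "- (norm z)\<^sup>2 + - (norm y)\<^sup>2 \<le> - (norm (y + z))\<^sup>2 / 2" by simp
  then have "exp (- (norm z)\<^sup>2) * exp (- (norm y)\<^sup>2) \<le> exp (- (norm (y + z))\<^sup>2 / 2)"
    by (simp add: exp_add[symmetric])
  then show ?thesis unfolding phi_def by (simp add: divide_right_mono)
qed

lemma cov_real:
  fixes f :: "real^2 \<Rightarrow> real" and g :: "real^2 \<Rightarrow> real^2"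
  assumes S: "S \<in> sets lebesgue"
    and der_g: "\<And>x. x \<in> S \<Longrightarrow> (g has_derivative g' x) (at x within S)"
    and inj: "inj_on g S"
    and int: "(\<lambda>x. \<bar>det (matrix (g' x))\<bar> * f (g x)) absolutely_integrable_on S"
  shows "f absolutely_integrable_on (g ` S) \<and> integral (g ` S) f = integral S (\<lambda>x. \<bar>det (matrix (g' x))\<bar> * f (g x))"
proof -
  let ?b = "integral S (\<lambda>x. \<bar>det (matrix (g' x))\<bar> * f (g x))"
  have "(\<lambda>x. \<bar>det (matrix (g' x))\<bar> *\<^sub>R vec (f (g x)) :: real^1) absolutely_integrable_on S \<and>
           integral S (\<lambda>x. \<bar>det (matrix (g' x))\<bar> *\<^sub>R vec (f (g x))) = (vec ?b :: real^1)
         \<longleftrightarrow> (\<lambda>x. vec (f x) :: real^1) absolutely_integrable_on (g ` S) \<and>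
           integral (g ` S) (\<lambda>x. vec (f x)) = (vec ?b :: real^1)"
    by (rule has_absolute_integral_change_of_variables[OF S der_g inj])
  moreover have "(\<lambda>x. \<bar>det (matrix (g' x))\<bar> *\<^sub>R vec (f (g x)) :: real^1) absolutely_integrable_on S \<and>
           integral S (\<lambda>x. \<bar>det (matrix (g' x))\<bar> *\<^sub>R vec (f (g x))) = (vec ?b :: real^1)"
    using int by (simp add: absolutely_integrable_on_1_iff integral_on_1_eq)
  ultimately show ?thesis
    by (simp add: absolutely_integrable_on_1_iff integral_on_1_eq)
qed

lemma prod2: "(\<Prod>i\<in>(UNIV::2 set). f i) = f 1 * f 2"
proof -
  have "(1::2) \<noteq> 2" by simp
  then show ?thesis unfolding UNIV_2 by simp
qed

lemma Gm_inj:
  assumes \<epsilon>: "\<bar>\<epsilon>\<bar> = 1" and \<sigma>: "\<bar>\<sigma>\<bar> = 1" and A: "0 < A" "A < pi"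
    and S: "\<And>p. p \<in> S \<Longrightarrow> 0 < p$1 \<and> p$1 < 1 \<and> 0 \<le> p$2 \<and> p$2 \<le> A"
  shows "inj_on (Gm z \<epsilon> \<alpha> \<sigma>) S"
proof (rule inj_onI)
  fix p q assume p: "p \<in> S" and q: "q \<in> S" and eq: "Gm z \<epsilon> \<alpha> \<sigma> p = Gm z \<epsilon> \<alpha> \<sigma> q"
  have "(rho (p$1))\<^sup>2 = (rho (q$1))\<^sup>2" using norm_Gm[OF \<epsilon>, of z \<alpha> \<sigma> p] norm_Gm[OF \<epsilon>, of z \<alpha> \<sigma> q] eq by simp
  then have "- ln (1 - p$1) = - ln (1 - q$1)" using rho_sq S[OF p] S[OF q] by simp
  then have 1: "p$1 = q$1" using S[OF p] S[OF q] by simp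
  define r where "r = \<epsilon> * rho (p$1)"
  have r: "r \<noteq> 0" unfolding r_def using rho_pos[of "p$1"] S[OF p] \<epsilon> by auto
  have "r * cos (\<alpha> + \<sigma> * p$2) = r * cos (\<alpha> + \<sigma> * q$2)"
       "r * sin (\<alpha> + \<sigma> * p$2) = r * sin (\<alpha> + \<sigma> * q$2)"
    using eq 1 unfolding Gm_def vec2_eq r_def by simp_all
  then have c: "cos (\<alpha> + \<sigma> * p$2) = cos (\<alpha> + \<sigma> * q$2)" and s: "sin (\<alpha> + \<sigma> * p$2) = sin (\<alpha> + \<sigma> * q$2)"
    using r by simp_all
  have "cos ((\<alpha> + \<sigma> * p$2) - (\<alpha> + \<sigma> * q$2)) = 1"
    unfolding cos_diff c s by (simp add: power2_eq_square[symmetric])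
  then obtain n :: int where n: "(\<alpha> + \<sigma> * p$2) - (\<alpha> + \<sigma> * q$2) = of_int n * 2 * pi"
    using cos_one_2pi_int by blast
  have dd: "(\<alpha> + \<sigma> * p$2) - (\<alpha> + \<sigma> * q$2) = \<sigma> * (p$2 - q$2)" by (simp add: algebra_simps)
  have "\<bar>(\<alpha> + \<sigma> * p$2) - (\<alpha> + \<sigma> * q$2)\<bar> = \<bar>p$2 - q$2\<bar>"
    unfolding dd abs_mult \<sigma> by simp
  also have "\<dots> < pi" using S[OF p] S[OF q] A by auto
  finally have "\<bar>real_of_int n\<bar> * (2 * pi) < pi" unfolding n by (simp add: abs_mult)
  then have "\<bar>real_of_int n\<bar> < 1" by (simp add: pi_gt_zero)
  then have "n = 0" by linarith
  then have "p$2 = q$2" using n \<sigma> by auto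
  with 1 show "p = q" unfolding vec2_eq by simp
qed

lemma sector:
  fixes z :: "real^2"
  assumes \<epsilon>: "\<bar>\<epsilon>\<bar> = 1" and \<sigma>: "\<bar>\<sigma>\<bar> = 1" and A: "0 < A" "A < pi" and \<delta>: "0 < \<delta>" "\<delta> < 1/2"
  defines "S \<equiv> cbox (vector [\<delta>, \<delta> * A]) (vector [1 - \<delta>, (1 - \<delta>) * A]) :: (real^2) set"
  shows "phi absolutely_integrable_on (Gm z \<epsilon> \<alpha> \<sigma> ` S) \<and>
    (1 - 2 * \<delta>) * ((1 - 2 * \<delta>) * A) * (exp (- (norm z)\<^sup>2) / (4 * pi)) \<le> integral (Gm z \<epsilon> \<alpha> \<sigma> ` S) phi"
proof -
  let ?G = "Gm z \<epsilon> \<alpha> \<sigma>"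
  let ?K = "exp (- (norm z)\<^sup>2) / (4 * pi)"
  have memS: "p \<in> S \<longleftrightarrow> \<delta> \<le> p$1 \<and> p$1 \<le> 1 - \<delta> \<and> \<delta> * A \<le> p$2 \<and> p$2 \<le> (1 - \<delta>) * A" for p
    unfolding S_def mem_box_cart forall_2 by simp
  have memS': "0 < p$1 \<and> p$1 < 1 \<and> 0 \<le> p$2 \<and> p$2 \<le> A" if "p \<in> S" for p
  proof -
    have "\<delta> * A \<ge> 0" "(1 - \<delta>) * A \<le> A" using A \<delta> by (simp_all add: mult_left_le_one_le)
    then show ?thesis using that \<delta> unfolding memS by auto
  qed
  have S_leb: "S \<in> sets lebesgue" unfolding S_def by simp
  have der: "(?G has_derivative Gd \<epsilon> \<alpha> \<sigma> p) (at p within S)" if "p \<in> S" for p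
    using memS'[OF that] by (intro Gm_deriv) auto
  have inj: "inj_on ?G S" by (rule Gm_inj[OF \<epsilon> \<sigma> A memS'])
  define H where "H p = phi (?G p) / (2 * (1 - p$1))" for p
  have FH: "\<bar>det (matrix (Gd \<epsilon> \<alpha> \<sigma> p))\<bar> * phi (?G p) = H p" if "p \<in> S" for p
    using memS'[OF that] unfolding det_Gd[OF \<epsilon> \<sigma>] H_def by (simp add: rho_rhod)
  have GC: "continuous_on S ?G" by (rule has_derivative_continuous_on[OF der])
  have PC: "continuous_on S (\<lambda>p. phi (?G p))"
    by (rule continuous_on_compose2[OF phi_cont GC]) auto
  have HC: "continuous_on S H" unfolding H_def
    by (intro continuous_intros PC) (use memS' in force)
  have Hint: "H integrable_on S" unfolding S_def by (rule integrable_continuous) (use HC S_def in simp)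
  have Hnn: "0 \<le> H p" if "p \<in> S" for p
    using memS'[OF that] unfolding H_def phi_def by simp
  have Fint: "(\<lambda>p. \<bar>det (matrix (Gd \<epsilon> \<alpha> \<sigma> p))\<bar> * phi (?G p)) absolutely_integrable_on S"
  proof (rule nonnegative_absolutely_integrable_1)
    show "(\<lambda>p. \<bar>det (matrix (Gd \<epsilon> \<alpha> \<sigma> p))\<bar> * phi (?G p)) integrable_on S"
    proof -
      have eq: "(\<lambda>p. \<bar>det (matrix (Gd \<epsilon> \<alpha> \<sigma> p))\<bar> * phi (?G p)) integrable_on S \<longleftrightarrow> H integrable_on S"
        by (rule Henstock_Kurzweil_Integration.integrable_cong) (rule FH)
      show ?thesis using eq Hint by simp
    qed
  qed (simp add: phi_def)
  have cov: "phi absolutely_integrable_on (?G ` S) \<and>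
      integral (?G ` S) phi = integral S (\<lambda>p. \<bar>det (matrix (Gd \<epsilon> \<alpha> \<sigma> p))\<bar> * phi (?G p))"
    by (rule cov_real[OF S_leb der inj Fint])
  have "integral S (\<lambda>p. \<bar>det (matrix (Gd \<epsilon> \<alpha> \<sigma> p))\<bar> * phi (?G p)) = integral S H"
    by (rule Henstock_Kurzweil_Integration.integral_cong) (rule FH)
  also have "integral S (\<lambda>_. ?K) \<le> integral S H"
  proof (rule integral_le)
    show "(\<lambda>_. ?K) integrable_on S" unfolding S_def by (rule integrable_const)
    show "H integrable_on S" by (rule Hint)
    fix p assume p: "p \<in> S"
    have "phi (?G p) = phi ((?G p - z) + z)" by simp
    also have "\<dots> \<ge> exp (- (norm z)\<^sup>2) * exp (- (norm (?G p - z))\<^sup>2) / (2 * pi)" by (rule phi_lower)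
    finally have "exp (- (norm z)\<^sup>2) * (1 - p$1) / (2 * pi) \<le> phi (?G p)"
      using norm_Gm[OF \<epsilon>, of z \<alpha> \<sigma> p] exp_rho[of "p$1"] memS'[OF p] by simp
    then have "exp (- (norm z)\<^sup>2) * (1 - p$1) / (2 * pi) / (2 * (1 - p$1)) \<le> H p"
      unfolding H_def using memS'[OF p] by (intro divide_right_mono) auto
    moreover have "exp (- (norm z)\<^sup>2) * (1 - p$1) / (2 * pi) / (2 * (1 - p$1)) = ?K"
      using memS'[OF p] by (simp add: field_simps)
    ultimately show "?K \<le> H p" by simp
  qed
  moreover have "integral S (\<lambda>_. ?K) = (1 - 2 * \<delta>) * ((1 - 2 * \<delta>) * A) * ?K"
  proof -
    have le: "\<delta> * A \<le> (1 - \<delta>) * A" using \<delta> A by (intro mult_right_mono) auto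
    have "vector [\<delta>, \<delta> * A] \<in> S" unfolding memS using le \<delta> by simp
    then have ne: "S \<noteq> {}" by blast
    have "measure lborel S = (\<Prod>i\<in>UNIV. (vector [1 - \<delta>, (1 - \<delta>) * A] :: real^2)$i - (vector [\<delta>, \<delta> * A] :: real^2)$i)"
      using ne unfolding S_def by (rule content_cbox_cart)
    also have "\<dots> = ((1 - \<delta>) - \<delta>) * ((1 - \<delta>) * A - \<delta> * A)"
      by (simp only: prod2 vector_2)
    also have "\<dots> = (1 - 2 * \<delta>) * ((1 - 2 * \<delta>) * A)" by (simp add: algebra_simps)
    finally have "measure lborel S = (1 - 2 * \<delta>) * ((1 - 2 * \<delta>) * A)" .
    then show ?thesis unfolding S_def by simp
  qed
  ultimately show ?thesis using cov by simp
qed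


lemma phi_nonneg: "0 \<le> phi x" by (simp add: phi_def)

lemma phi_borel[measurable]: "phi \<in> borel_measurable borel"
  unfolding phi_def by (intro borel_measurable_continuous_onI continuous_intros) auto

lemma n2: "(norm (x::real^2))\<^sup>2 = (\<Sum>b\<in>(Basis::(real^2) set). (x \<bullet> b)\<^sup>2)"
  unfolding power2_norm_eq_inner
  by (subst euclidean_inner) (simp add: power2_eq_square)

lemma phi_prod: "phi x = (\<Prod>b\<in>(Basis::(real^2) set). std_normal_density (x \<bullet> b))"
proof -
  have "(\<Prod>b\<in>(Basis::(real^2) set). std_normal_density (x \<bullet> b))
     = (\<Prod>b\<in>(Basis::(real^2) set). (1 / sqrt (2 * pi)) * exp (- (x \<bullet> b)\<^sup>2 / 2))"
    by (rule prod.cong) (simp_all add: std_normal_density_def)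
  also have "\<dots> = (1 / sqrt (2 * pi)) ^ 2 * (\<Prod>b\<in>(Basis::(real^2) set). exp (- (x \<bullet> b)\<^sup>2 / 2))"
    by (simp only: prod.distrib prod_constant DIM_cart DIM_real) simp
  also have "(\<Prod>b\<in>(Basis::(real^2) set). exp (- (x \<bullet> b)\<^sup>2 / 2)) = exp (- (norm x)\<^sup>2 / 2)"
  proof -
    have "- (norm x)\<^sup>2 / 2 = (\<Sum>b\<in>(Basis::(real^2) set). - (x \<bullet> b)\<^sup>2 / 2)"
      by (simp only: n2 sum_divide_distrib[symmetric] sum_negf)
    then show ?thesis by (simp add: exp_sum)
  qed
  also have "(1 / sqrt (2 * pi)) ^ 2 = 1 / (2 * pi)"
    by (simp add: power_divide)
  finally show ?thesis by (simp add: phi_def)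
qed

lemma std_nn: "(\<integral>\<^sup>+x. ennreal (std_normal_density x) \<partial>lborel) = 1"
proof -
  interpret prob_space "density lborel std_normal_density"
    by (rule prob_space_normal_density) simp
  show ?thesis using emeasure_space_1 by (simp add: emeasure_density)
qed

lemma nn_phi: "(\<integral>\<^sup>+x. ennreal (phi x) \<partial>lborel) = 1"
proof -
  have "(\<integral>\<^sup>+x. ennreal (phi x) \<partial>lborel)
      = (\<integral>\<^sup>+x. (\<Prod>b\<in>(Basis::(real^2) set). ennreal (std_normal_density (x \<bullet> b))) \<partial>lborel)"
    by (rule nn_integral_cong) (simp only: phi_prod prod_ennreal normal_density_nonneg)
  also have "\<dots> = (\<Prod>b\<in>(Basis::(real^2) set). (\<integral>\<^sup>+x. ennreal (std_normal_density x) \<partial>lborel))"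
    by (rule nn_integral_lborel_prod) auto
  also have "\<dots> = 1" by (simp only: std_nn prod.neutral_const)
  finally show ?thesis .
qed


lemma inner2: "(x::real^2) \<bullet> y = x$1 * y$1 + x$2 * y$2"
  by (simp add: inner_vec_def sum_2)

lemma D_nonzero:
  fixes u v :: "real^2"
  assumes "independent {u, v}" "u \<noteq> v"
  shows "u$1 * v$2 - u$2 * v$1 \<noteq> 0"
proof
  assume D: "u$1 * v$2 - u$2 * v$1 = 0"
  have "u \<noteq> 0" using assms(1) dependent_zero by blast
  then obtain i where i: "u$i \<noteq> 0" by (auto simp: vec_eq_iff)
  have "v = (v$i / u$i) *\<^sub>R u"
  proof -
    have "i = 1 \<or> i = 2" by (rule exhaust_2)
    then show ?thesis
    proof
      assume "i = 1" then show ?thesis using i D unfolding vec2_eq by (auto simp: field_simps)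
    next
      assume "i = 2" then show ?thesis using i D unfolding vec2_eq by (auto simp: field_simps)
    qed
  qed
  then have "v \<in> span {u}" by (metis span_base span_scale singletonI)
  moreover have "{u, v} - {v} = {u}" using assms(2) by auto
  ultimately have "dependent {u, v}" unfolding dependent_def by auto
  then show False using assms(1) by simp
qed

lemma trig1: assumes "\<bar>\<sigma>\<bar> = (1::real)"
  shows "sin (A - t) * cos \<alpha> + sin t * cos (\<alpha> + \<sigma> * A) = sin A * cos (\<alpha> + \<sigma> * t)"
    and "sin (A - t) * sin \<alpha> + sin t * sin (\<alpha> + \<sigma> * A) = sin A * sin (\<alpha> + \<sigma> * t)"
proof -
  have "\<sigma> = 1 \<or> \<sigma> = -1" using assms by auto
  then show "sin (A - t) * cos \<alpha> + sin t * cos (\<alpha> + \<sigma> * A) = sin A * cos (\<alpha> + \<sigma> * t)"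
    and "sin (A - t) * sin \<alpha> + sin t * sin (\<alpha> + \<sigma> * A) = sin A * sin (\<alpha> + \<sigma> * t)"
    by (auto simp: sin_add cos_add sin_diff cos_diff algebra_simps)
qed

lemma in_cone:
  fixes u v z :: "real^2"
  assumes s: "\<bar>\<sigma>\<bar> = 1" and A: "0 < A" "A < pi" and nu: "nu > 0" and nv: "nv > 0"
    and u1: "u$1 = nu * cos \<alpha>" and u2: "u$2 = nu * sin \<alpha>"
    and v1: "v$1 = nv * cos (\<alpha> + \<sigma> * A)" and v2: "v$2 = nv * sin (\<alpha> + \<sigma> * A)"
    and t: "0 < t" "t < A" and r: "r \<noteq> 0"
  shows "\<exists>a b. (r * cos (\<alpha> + \<sigma> * t)) *\<^sub>R e1 + (r * sin (\<alpha> + \<sigma> * t)) *\<^sub>R e2 + z = z + a *\<^sub>R u + b *\<^sub>R v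
     \<and> (if r > 0 then 0 < a \<and> 0 < b else a < 0 \<and> b < 0)"
proof -
  have sA: "sin A > 0" using A by (simp add: sin_gt_zero)
  have st: "sin t > 0" using t A by (simp add: sin_gt_zero)
  have sAt: "sin (A - t) > 0" using t A by (simp add: sin_gt_zero)
  define a where "a = r * sin (A - t) / (nu * sin A)"
  define b where "b = r * sin t / (nv * sin A)"
  have eq: "(r * cos (\<alpha> + \<sigma> * t)) *\<^sub>R e1 + (r * sin (\<alpha> + \<sigma> * t)) *\<^sub>R e2 + z = z + a *\<^sub>R u + b *\<^sub>R v"
  proof -
    have "a * u$1 + b * v$1 = r * (sin (A - t) * cos \<alpha> + sin t * cos (\<alpha> + \<sigma> * A)) / sin A"
      unfolding a_def b_def u1 v1 using nu nv sA by (simp add: field_simps)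
    also have "\<dots> = r * cos (\<alpha> + \<sigma> * t)" using trig1(1)[OF s] sA by simp
    finally have 1: "a * u$1 + b * v$1 = r * cos (\<alpha> + \<sigma> * t)" .
    have "a * u$2 + b * v$2 = r * (sin (A - t) * sin \<alpha> + sin t * sin (\<alpha> + \<sigma> * A)) / sin A"
      unfolding a_def b_def u2 v2 using nu nv sA by (simp add: field_simps)
    also have "\<dots> = r * sin (\<alpha> + \<sigma> * t)" using trig1(2)[OF s] sA by simp
    finally have 2: "a * u$2 + b * v$2 = r * sin (\<alpha> + \<sigma> * t)" .
    show ?thesis unfolding vec2_eq using 1 2 by simp
  qed
  have "if r > 0 then 0 < a \<and> 0 < b else a < 0 \<and> b < 0"
  proof (cases "r > 0")
    case True then show ?thesis using nu nv sA st sAt by (simp add: a_def b_def)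
  next
    case False then have "r < 0" using r by simp
    then show ?thesis using nu nv sA st sAt
      by (simp add: a_def b_def divide_neg_pos mult_neg_pos)
  qed
  then show ?thesis using eq by blast
qed

lemma angle_setup:
  fixes u v :: "real^2"
  assumes D: "u$1 * v$2 - u$2 * v$1 \<noteq> 0"
  obtains \<alpha> \<sigma> where "\<bar>\<sigma>\<bar> = 1" "0 < vec_angle u v" "vec_angle u v < pi"
    "u$1 = norm u * cos \<alpha>" "u$2 = norm u * sin \<alpha>"
    "v$1 = norm v * cos (\<alpha> + \<sigma> * vec_angle u v)" "v$2 = norm v * sin (\<alpha> + \<sigma> * vec_angle u v)"
proof -
  have "u \<noteq> 0" "v \<noteq> 0" using D by auto
  then have nu: "norm u > 0" and nv: "norm v > 0" by auto
  define x1 where "x1 = u$1 / norm u"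
  define x2 where "x2 = u$2 / norm u"
  define y1 where "y1 = v$1 / norm v"
  define y2 where "y2 = v$2 / norm v"
  have xx: "x1\<^sup>2 + x2\<^sup>2 = 1"
    unfolding x1_def x2_def power_divide add_divide_distrib[symmetric] norm2[symmetric] using nu by simp
  have yy: "y1\<^sup>2 + y2\<^sup>2 = 1"
    unfolding y1_def y2_def power_divide add_divide_distrib[symmetric] norm2[symmetric] using nv by simp
  define c where "c = x1 * y1 + x2 * y2"
  define s where "s = x1 * y2 - x2 * y1"
  have c_eq: "(u \<bullet> v) / (norm u * norm v) = c"
    unfolding c_def x1_def x2_def y1_def y2_def inner2 using nu nv by (simp add: field_simps)
  have s_ne: "s \<noteq> 0"
    unfolding s_def x1_def x2_def y1_def y2_def using nu nv D by (simp add: field_simps)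
  have cs: "c\<^sup>2 + s\<^sup>2 = 1"
  proof -
    have "c\<^sup>2 + s\<^sup>2 = (x1\<^sup>2 + x2\<^sup>2) * (y1\<^sup>2 + y2\<^sup>2)" unfolding c_def s_def by algebra
    then show ?thesis using xx yy by simp
  qed
  have c1: "c\<^sup>2 < 1" using cs s_ne by (smt (verit) zero_less_power2)
  then have "\<bar>c\<bar> < 1" using abs_square_less_1 by blast
  then have cb: "-1 < c" "c < 1" by auto
  define A where "A = arccos c"
  have A_eq: "vec_angle u v = A" unfolding vec_angle_def A_def c_eq ..
  have A_b: "0 < A" "A < pi" unfolding A_def using arccos_lt_bounded[OF cb] by auto
  have cA: "cos A = c" unfolding A_def using cb by simp
  have sA: "sin A = sqrt (1 - c\<^sup>2)" unfolding A_def using cb by (simp add: sin_arccos)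
  also have "\<dots> = \<bar>s\<bar>" using cs by (metis add_diff_cancel_left' real_sqrt_abs)
  finally have sA': "sin A = \<bar>s\<bar>" .
  define \<sigma> where "\<sigma> = (if s > 0 then 1 else -1::real)"
  have \<sigma>: "\<bar>\<sigma>\<bar> = 1" by (simp add: \<sigma>_def)
  have cosA: "cos (\<sigma> * A) = c" using cA by (simp add: \<sigma>_def)
  have sinA: "sin (\<sigma> * A) = s" using sA' s_ne by (auto simp: \<sigma>_def)
  obtain \<alpha> where \<alpha>: "x1 = cos \<alpha>" "x2 = sin \<alpha>" using sincos_total_2pi[OF xx] by metis
  have "cos (\<alpha> + \<sigma> * A) = y1"
  proof -
    have "cos (\<alpha> + \<sigma> * A) = x1 * c - x2 * s" by (simp add: cos_add cosA sinA \<alpha>)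
    also have "\<dots> = y1 * (x1\<^sup>2 + x2\<^sup>2)" unfolding c_def s_def by algebra
    finally show ?thesis using xx by simp
  qed
  moreover have "sin (\<alpha> + \<sigma> * A) = y2"
  proof -
    have "sin (\<alpha> + \<sigma> * A) = x2 * c + x1 * s" by (simp add: sin_add cosA sinA \<alpha>)
    also have "\<dots> = y2 * (x1\<^sup>2 + x2\<^sup>2)" unfolding c_def s_def by algebra
    finally show ?thesis using xx by simp
  qed
  ultimately show ?thesis
    using that[OF \<sigma>, of \<alpha>] A_b nu nv \<alpha> unfolding A_eq x1_def x2_def y1_def y2_def
    by (simp add: field_simps)
qed



lemma coord_unique:
  fixes u v z :: "real^2"
  assumes D: "u$1 * v$2 - u$2 * v$1 \<noteq> 0" and eq: "z + a *\<^sub>R u + b *\<^sub>R v = z + a' *\<^sub>R u + b' *\<^sub>R v"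
  shows "a = a'"
proof -
  have 1: "(a - a') * u$1 + (b - b') * v$1 = 0" and 2: "(a - a') * u$2 + (b - b') * v$2 = 0"
    using eq unfolding vec2_eq by (simp_all add: algebra_simps)
  have "(a - a') * (u$1 * v$2 - u$2 * v$1) = v$2 * ((a - a') * u$1 + (b - b') * v$1) - v$1 * ((a - a') * u$2 + (b - b') * v$2)"
    by (simp add: algebra_simps)
  also have "\<dots> = 0" using 1 2 by simp
  finally show ?thesis using D by simp
qed

lemma solve2:
  fixes y1 y2 u1 u2 v1 v2 :: real
  assumes D: "u1 * v2 - u2 * v1 \<noteq> 0"
  shows "((y1 * v2 - y2 * v1) / (u1 * v2 - u2 * v1)) * u1 + ((u1 * y2 - u2 * y1) / (u1 * v2 - u2 * v1)) * v1 = y1"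
    and "((y1 * v2 - y2 * v1) / (u1 * v2 - u2 * v1)) * u2 + ((u1 * y2 - u2 * y1) / (u1 * v2 - u2 * v1)) * v2 = y2"
proof -
  define D where "D = u1 * v2 - u2 * v1"
  have g: "(a / D) * c + (b / D) * e = (a * c + b * e) / D" for a b c e :: real
    by (simp add: add_divide_distrib)
  have n1: "(y1 * v2 - y2 * v1) * u1 + (u1 * y2 - u2 * y1) * v1 = y1 * D" unfolding D_def by algebra
  have n2: "(y1 * v2 - y2 * v1) * u2 + (u1 * y2 - u2 * y1) * v2 = y2 * D" unfolding D_def by algebra
  have D0: "D \<noteq> 0" using D by (simp add: D_def)
  show "((y1 * v2 - y2 * v1) / (u1 * v2 - u2 * v1)) * u1 + ((u1 * y2 - u2 * y1) / (u1 * v2 - u2 * v1)) * v1 = y1"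
    unfolding D_def[symmetric] g n1 using D0 by simp
  show "((y1 * v2 - y2 * v1) / (u1 * v2 - u2 * v1)) * u2 + ((u1 * y2 - u2 * y1) / (u1 * v2 - u2 * v1)) * v2 = y2"
    unfolding D_def[symmetric] g n2 using D0 by simp
qed

lemma cone_open:
  fixes u v z :: "real^2"
  assumes D: "u$1 * v$2 - u$2 * v$1 \<noteq> 0"
  shows "open (double_cone z u v)"
proof -
  define d where "d = u$1 * v$2 - u$2 * v$1"
  define ca where "ca x = ((x - z)$1 * v$2 - (x - z)$2 * v$1) / d" for x
  define cb where "cb x = (u$1 * (x - z)$2 - u$2 * (x - z)$1) / d" for x
  have d: "d \<noteq> 0" using D by (simp add: d_def)
  have "double_cone z u v = {x. 0 < ca x \<and> 0 < cb x} \<union> {x. ca x < 0 \<and> cb x < 0}"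
  proof (intro set_eqI iffI)
    fix x assume "x \<in> double_cone z u v"
    then obtain a b where x: "x = z + a *\<^sub>R u + b *\<^sub>R v" and ab: "(a > 0 \<and> b > 0) \<or> (a < 0 \<and> b < 0)"
      unfolding double_cone_def by blast
    have "ca x = a" "cb x = b" unfolding ca_def cb_def x using d
      by (simp_all add: field_simps d_def)
    then show "x \<in> {x. 0 < ca x \<and> 0 < cb x} \<union> {x. ca x < 0 \<and> cb x < 0}" using ab by auto
  next
    fix x assume x: "x \<in> {x. 0 < ca x \<and> 0 < cb x} \<union> {x. ca x < 0 \<and> cb x < 0}"
    have "ca x * u$1 + cb x * v$1 = (x - z)$1" "ca x * u$2 + cb x * v$2 = (x - z)$2"
      unfolding ca_def cb_def d_def using solve2[OF D, of "(x - z)$1" "(x - z)$2"] by simp_all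
    then have "x = z + ca x *\<^sub>R u + cb x *\<^sub>R v" unfolding vec2_eq by simp
    then show "x \<in> double_cone z u v" using x unfolding double_cone_def by blast
  qed
  moreover have "continuous_on UNIV ca" "continuous_on UNIV cb"
    unfolding ca_def[abs_def] cb_def[abs_def] by (intro continuous_intros; simp add: d)+
  ultimately show ?thesis
    by (auto intro!: open_Un open_Int open_Collect_less continuous_intros simp: Collect_conj_eq)
qed

theorem lemma6:
  fixes z u v :: "real^2"
  assumes "independent {u, v}" and "u \<noteq> v"
  shows "measure gauss2 (double_cone z u v)
           \<ge> vec_angle u v / (2 * pi) * exp (- (norm z)\<^sup>2)"
proof -
  define C where "C = double_cone z u v"
  define A where "A = vec_angle u v"
  have D: "u$1 * v$2 - u$2 * v$1 \<noteq> 0" by (rule D_nonzero[OF assms])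
  obtain \<alpha> \<sigma> where \<sigma>: "\<bar>\<sigma>\<bar> = 1" and A: "0 < A" "A < pi"
    and u1: "u$1 = norm u * cos \<alpha>" and u2: "u$2 = norm u * sin \<alpha>"
    and v1: "v$1 = norm v * cos (\<alpha> + \<sigma> * A)" and v2: "v$2 = norm v * sin (\<alpha> + \<sigma> * A)"
    using angle_setup[OF D] unfolding A_def by metis
  have "u \<noteq> 0" "v \<noteq> 0" using D by auto
  then have nu: "norm u > 0" and nv: "norm v > 0" by auto
  have C_open: "open C" unfolding C_def by (rule cone_open[OF D])
  then have C_borel[measurable]: "C \<in> sets borel" by simp
  have phi_int_UNIV: "phi absolutely_integrable_on UNIV"
  proof (rule nonnegative_absolutely_integrable_1)
    show "phi integrable_on UNIV"
      by (rule nn_integral_integrable_on) (auto simp: nn_phi phi_nonneg)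
  qed (simp add: phi_nonneg)
  have phi_abs_C: "phi absolutely_integrable_on C"
    by (rule set_integrable_subset[OF phi_int_UNIV]) auto
  then have phi_int_C: "phi integrable_on C" unfolding absolutely_integrable_on_def by simp
  have M: "measure gauss2 C = integral C phi"
  proof -
    have dens: "gauss2 = density lborel (\<lambda>x. ennreal (phi x))"
      unfolding gauss2_def phi_def ..
    have "emeasure gauss2 C = (\<integral>\<^sup>+x\<in>C. ennreal (phi x) \<partial>lborel)"
      unfolding dens by (rule emeasure_density) auto
    also have "\<dots> = integral C phi"
    proof (rule set_nn_integral_lborel_eq_integral)
      show "set_borel_measurable borel C phi" unfolding set_borel_measurable_def by measurable
      show "0 \<le> phi x" for x by (rule phi_nonneg)
      have "(\<integral>\<^sup>+x\<in>C. ennreal (phi x) \<partial>lborel) \<le> (\<integral>\<^sup>+x. ennreal (phi x) \<partial>lborel)"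
        by (intro nn_integral_mono) (auto simp: indicator_def)
      then show "(\<integral>\<^sup>+x\<in>C. ennreal (phi x) \<partial>lborel) < \<infinity>" using nn_phi by (simp add: order_le_less_trans)
    qed
    finally have "emeasure gauss2 C = ennreal (integral C phi)" .
    moreover have "0 \<le> integral C phi" by (rule integral_nonneg[OF phi_int_C]) (simp add: phi_nonneg)
    ultimately show ?thesis by (simp add: measure_def)
  qed
  define K where "K = exp (- (norm z)\<^sup>2) / (4 * pi)"
  have bound: "2 * ((1 - 2 * \<delta>) * ((1 - 2 * \<delta>) * A) * K) \<le> integral C phi" if \<delta>: "0 < \<delta>" "\<delta> < 1/2" for \<delta>
  proof -
    define S where "S = (cbox (vector [\<delta>, \<delta> * A]) (vector [1 - \<delta>, (1 - \<delta>) * A]) :: (real^2) set)"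
    define P where "P = Gm z 1 \<alpha> \<sigma> ` S"
    define N where "N = Gm z (-1) \<alpha> \<sigma> ` S"
    have memS: "p \<in> S \<Longrightarrow> 0 < p$1 \<and> p$1 < 1 \<and> 0 < p$2 \<and> p$2 < A" for p
    proof -
      assume p: "p \<in> S"
      have "\<delta> \<le> p$1 \<and> p$1 \<le> 1 - \<delta> \<and> \<delta> * A \<le> p$2 \<and> p$2 \<le> (1 - \<delta>) * A"
        using p unfolding S_def mem_box_cart forall_2 by simp
      moreover have "0 < \<delta> * A" "(1 - \<delta>) * A < A" using A \<delta> by simp_all
      ultimately show ?thesis using \<delta> by linarith
    qed
    have coords: "\<exists>a b. Gm z \<epsilon> \<alpha> \<sigma> p = z + a *\<^sub>R u + b *\<^sub>R v \<and>
        (if \<epsilon> * rho (p$1) > 0 then 0 < a \<and> 0 < b else a < 0 \<and> b < 0)"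
      if p: "p \<in> S" and \<epsilon>: "\<bar>\<epsilon>\<bar> = 1" for p \<epsilon>
    proof -
      have "\<epsilon> * rho (p$1) \<noteq> 0" using rho_pos[of "p$1"] memS[OF p] \<epsilon> by auto
      from in_cone[OF \<sigma> A nu nv u1 u2 v1 v2, of "p$2" "\<epsilon> * rho (p$1)" z] memS[OF p] this
      show ?thesis unfolding Gm_def by simp
    qed
    have rpos: "rho (p$1) > 0" if "p \<in> S" for p using rho_pos memS[OF that] by auto
    have PC: "P \<subseteq> C"
    proof
      fix x assume "x \<in> P"
      then obtain p where p: "p \<in> S" and x: "x = Gm z 1 \<alpha> \<sigma> p" unfolding P_def by auto
      obtain a b where "x = z + a *\<^sub>R u + b *\<^sub>R v" "0 < a \<and> 0 < b"
        using coords[OF p, of 1] rpos[OF p] x by auto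
      then show "x \<in> C" unfolding C_def double_cone_def by blast
    qed
    have NC: "N \<subseteq> C"
    proof
      fix x assume "x \<in> N"
      then obtain p where p: "p \<in> S" and x: "x = Gm z (-1) \<alpha> \<sigma> p" unfolding N_def by auto
      obtain a b where "x = z + a *\<^sub>R u + b *\<^sub>R v" "a < 0 \<and> b < 0"
        using coords[OF p, of "-1"] rpos[OF p] x by auto
      then show "x \<in> C" unfolding C_def double_cone_def by blast
    qed
    have PN: "P \<inter> N = {}"
    proof (rule ccontr)
      assume "P \<inter> N \<noteq> {}"
      then obtain x where "x \<in> P" "x \<in> N" by blast
      then obtain p q where p: "p \<in> S" "x = Gm z 1 \<alpha> \<sigma> p" and q: "q \<in> S" "x = Gm z (-1) \<alpha> \<sigma> q"
        unfolding P_def N_def by auto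
      obtain a b where ab: "x = z + a *\<^sub>R u + b *\<^sub>R v" "0 < a"
        using coords[OF p(1), of 1] rpos[OF p(1)] p(2) by auto
      obtain a' b' where ab': "x = z + a' *\<^sub>R u + b' *\<^sub>R v" "a' < 0"
        using coords[OF q(1), of "-1"] rpos[OF q(1)] q(2) by auto
      have "a = a'" using coord_unique[OF D] ab(1) ab'(1) by metis
      then show False using ab(2) ab'(2) by simp
    qed
    have sP: "phi absolutely_integrable_on P \<and> (1 - 2 * \<delta>) * ((1 - 2 * \<delta>) * A) * K \<le> integral P phi"
      unfolding P_def S_def K_def by (rule sector) (use A \<delta> \<sigma> in auto)
    have sN: "phi absolutely_integrable_on N \<and> (1 - 2 * \<delta>) * ((1 - 2 * \<delta>) * A) * K \<le> integral N phi"
      unfolding N_def S_def K_def by (rule sector) (use A \<delta> \<sigma> in auto)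
    have iP: "phi integrable_on P" using sP unfolding absolutely_integrable_on_def by simp
    have iN: "phi integrable_on N" using sN unfolding absolutely_integrable_on_def by simp
    have "integral (P \<union> N) phi = integral P phi + integral N phi"
      by (rule integral_Un[OF iP iN]) (simp add: PN)
    also have "integral (P \<union> N) phi \<le> integral C phi"
    proof (rule integral_subset_le)
      show "P \<union> N \<subseteq> C" using PC NC by auto
      show "phi integrable_on P \<union> N" by (rule integrable_Un) (use PN iP iN in auto)
      show "phi integrable_on C" by (rule phi_int_C)
      show "\<forall>x\<in>C. 0 \<le> phi x" by (simp add: phi_nonneg)
    qed
    ultimately show ?thesis using sP sN by linarith
  qed
  define B where "B = A / (2 * pi) * exp (- (norm z)\<^sup>2)"
  have B_pos: "B > 0" unfolding B_def using A by simp
  have BK: "2 * ((1 - 2 * \<delta>) * ((1 - 2 * \<delta>) * A) * K) = (1 - 2 * \<delta>)\<^sup>2 * B" for \<delta>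
    unfolding B_def K_def by (simp add: power2_eq_square field_simps)
  have M0: "0 \<le> integral C phi" by (rule integral_nonneg[OF phi_int_C]) (simp add: phi_nonneg)
  have "B \<le> integral C phi"
  proof (rule ccontr)
    assume "\<not> B \<le> integral C phi"
    then have lt: "integral C phi < B" by simp
    define \<delta> where "\<delta> = (B - integral C phi) / (4 * B)"
    have \<delta>0: "0 < \<delta>" unfolding \<delta>_def using lt B_pos by simp
    have \<delta>1: "\<delta> \<le> 1/4" unfolding \<delta>_def using M0 B_pos by (simp add: field_simps)
    have "(1 - 2 * \<delta>)\<^sup>2 * B \<le> integral C phi" using bound[of \<delta>] \<delta>0 \<delta>1 BK[of \<delta>] by simp
    moreover have "(1 - 2 * \<delta>)\<^sup>2 * B = (1 - 4 * \<delta>) * B + 4 * \<delta>\<^sup>2 * B" by (simp add: power2_eq_square algebra_simps)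
    moreover have "(1 - 4 * \<delta>) * B = integral C phi" unfolding \<delta>_def using B_pos by (simp add: field_simps)
    moreover have "4 * \<delta>\<^sup>2 * B > 0" using \<delta>0 B_pos by simp
    ultimately show False by linarith
  qed
  then show ?thesis unfolding B_def A_def C_def M[unfolded C_def] by simp
qed

end
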